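(* Let $m,n\geq1$. The quiver $\mathrm Q_m^n$ is the double quiver of the graph $\Gamma_m^n$: it has the same vertices, and for each edge of $\Gamma_m^n$ between $e_\lambda$ and $e_\mu$ it has exactly one arrow from $e_\lambda$ to $e_\mu$ and exactly one arrow from $e_\mu$ to $e_\lambda$, and it has no other arrows.
   Context: Fix a field $\Bbbk$. A weight of type $(m,n)$ is a word in $\vee$ ("down") and $\wedge$ ("up") with $m$ letters $\vee$ and $n$ letters $\wedge$; $\Lambda_m^n$ is the set of weights. Place the $m+n$ points on a horizontal line. A cup diagram is a collection of pairwise non-intersecting curves below the line, each a cup (lower semicircle joining two points) or a half-line (ray going down), each point on exactly one curve; a cap diagram is the mirror image. $\underline{\lambda}$: repeatedly join neighbouring $\vee\wedge$ pairs ($\vee$ left) by cups, ignoring joined points, half-lines elsewhere; $\overline\lambda$ its mirror image. An arc diagram $\underline\alpha\lambda\overline\beta$ ($\alpha,\beta,\lambda\in\Lambda_m^n$; cup diagram of $\alpha$ below, cap diagram of $\beta$ above, labels $\lambda$) requires every cup/cap to join a $\vee$ and a $\wedge$ (labels orient components: $\vee$ down, $\wedge$ up) and no two half-lines on the same side at positions $i<j$ labelled $\vee,\wedge$. A cup/cap is clockwise if its left endpoint is $\wedge$; the degree is the number of clockwise cups and caps. The degree-0 arc diagrams are exactly $e_\lambda:=\underline\lambda\lambda\overline\lambda$; gluing each cup of $\underline\lambda$ to its mirror cap of $\overline\lambda$ gives the (counterclockwise) circles of $e_\lambda$. $\mathrm Q_m^n$ is the quiver with vertices $\{e_\lambda\}_{\lambda\in\Lambda_m^n}$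 and one arrow from $e_\alpha$ to $e_\beta$ for each arc diagram $\underline\alpha\lambda\overline\beta$ of degree $1$. $\Gamma_m^n$ is the simple undirected graph with vertices $\{e_\lambda\}_{\lambda\in\Lambda_m^n}$ and an edge between $e_\lambda$ and $e_\mu$ if one of $\lambda,\mu$ is obtained from the other by exchanging the labels $\vee$ and $\wedge$ at the two endpoints of a $\vee\cdots\wedge$ pair lying on the same circle of its degree-zero diagram (i.e. the two endpoints of one cup of $\underline\lambda$, resp. $\underline\mu$). *)

theory Defs
  imports Main
begin

text \<open>Letters of a weight: Down = the symbol vee, Up = the symbol wedge.
  A weight is a word (list), positions are 0,...,m+n-1 from left to right.\<close>
datatype sym = Down | Up

definition weights :: "nat \<Rightarrow> nat \<Rightarrow> sym list set" where
  "weights m n = {w. length (filter (\<lambda>s. s = Down) w) = m \<and>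
                     length (filter (\<lambda>s. s = Up) w) = n}"

text \<open>Repeatedly joining neighbouring Down-Up pairs (Down on the left), ignoring
  already joined points, realised by the usual left-to-right scan with a stack of
  not yet joined Down positions.\<close>
fun join_scan :: "nat list \<Rightarrow> (nat \<times> sym) list \<Rightarrow> (nat \<times> nat) list" where
  "join_scan st [] = []"
| "join_scan st ((i, Down) # xs) = join_scan (i # st) xs"
| "join_scan [] ((i, Up) # xs) = join_scan [] xs"
| "join_scan (k # st) ((j, Up) # xs) = (k, j) # join_scan st xs"

text \<open>The cups of the cup diagram of a weight (equivalently the caps of its
  cap diagram, which is its mirror image); all other points carry half-lines.\<close>
definition cups :: "sym list \<Rightarrow> (nat \<times> nat) set" where
  "cups w = set (join_scan [] (zip [0..<length w] w))"

definition endpoints :: "(nat \<times> nat) set \<Rightarrow> nat set" where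
  "endpoints C = fst ` C \<union> snd ` C"

definition halflines :: "sym list \<Rightarrow> nat set" where
  "halflines w = {0..<length w} - endpoints (cups w)"

text \<open>Conditions on one side (cups of alpha below, or caps of beta above) of the
  arc diagram with labels lam.\<close>
definition side_ok :: "sym list \<Rightarrow> sym list \<Rightarrow> bool" where
  "side_ok a lam \<longleftrightarrow>
     (\<forall>(i, j) \<in> cups a. lam ! i \<noteq> lam ! j) \<and>
     \<not> (\<exists>i \<in> halflines a. \<exists>j \<in> halflines a. i < j \<and> lam ! i = Down \<and> lam ! j = Up)"

definition arc_diagram :: "sym list \<Rightarrow> sym list \<Rightarrow> sym list \<Rightarrow> bool" where
  "arc_diagram a lam b \<longleftrightarrow> side_ok a lam \<and> side_ok b lam"

definition clockwise :: "sym list \<Rightarrow> sym list \<Rightarrow> nat" where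
  "clockwise a lam = card {(i, j) \<in> cups a. lam ! i = Up}"

definition degree :: "sym list \<Rightarrow> sym list \<Rightarrow> sym list \<Rightarrow> nat" where
  "degree a lam b = clockwise a lam + clockwise b lam"

text \<open>Number of arrows of Q_m^n from e_alpha to e_beta: one per arc diagram
  underline(alpha) lam overline(beta) of degree 1 (lam ranging over weights).\<close>
definition num_arrows :: "nat \<Rightarrow> nat \<Rightarrow> sym list \<Rightarrow> sym list \<Rightarrow> nat" where
  "num_arrows m n a b =
     card {lam \<in> weights m n. arc_diagram a lam b \<and> degree a lam b = 1}"

definition swap_labels :: "nat \<Rightarrow> nat \<Rightarrow> sym list \<Rightarrow> sym list" where
  "swap_labels i j w = w[i := w ! j, j := w ! i]"

definition gamma_edge :: "sym list \<Rightarrow> sym list \<Rightarrow> bool" where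
  "gamma_edge lam mu \<longleftrightarrow>
     (\<exists>(i, j) \<in> cups lam. mu = swap_labels i j lam) \<or>
     (\<exists>(i, j) \<in> cups mu. lam = swap_labels i j mu)"

end

theory Submission imports Defs begin

lemma zip_upt_Cons: "zip [k..<k + length (x#ws)] (x#ws) = (k,x) # zip [Suc k..<Suc k + length ws] ws"
  by (simp del: upt_Suc add: upt_conv_Cons)

lemma js_A1:
  assumes "(i,j) \<in> set (join_scan st (zip [k..<k+length ws] ws))" "\<forall>s\<in>set st. s<k"
  shows "k \<le> j \<and> j < k+length ws \<and> ws!(j-k) = Up \<and> i<j \<and> (i \<in> set st \<or> (k \<le> i \<and> ws!(i-k) = Down))"
  using assms
proof (induction ws arbitrary: st k)
  case Nil
  then show ?case by simp
next
  case (Cons x ws)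
  show ?case
  proof (cases x)
    case Down
    have "(i,j) \<in> set (join_scan (k#st) (zip [Suc k..<Suc k+length ws] ws))"
      using Cons.prems(1)[unfolded zip_upt_Cons] Down by simp
    moreover have "\<forall>s\<in>set (k#st). s < Suc k" using Cons.prems by auto
    ultimately have "Suc k \<le> j \<and> j < Suc k+length ws \<and> ws!(j-Suc k) = Up \<and> i<j \<and> (i \<in> set (k#st) \<or> (Suc k \<le> i \<and> ws!(i-Suc k) = Down))"
      using Cons.IH by blast
    then show ?thesis using Down by (auto simp: nth_Cons')
  next
    case Up
    show ?thesis
    proof (cases st)
      case Nil
      have "(i,j) \<in> set (join_scan [] (zip [Suc k..<Suc k+length ws] ws))"
        using Cons.prems(1)[unfolded zip_upt_Cons] Up Nil by simp
      then have "Suc k \<le> j \<and> j < Suc k+length ws \<and> ws!(j-Suc k) = Up \<and> i<j \<and> (i \<in> set [] \<or> (Suc k \<le> i \<and> ws!(i-Suc k) = Down))"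
        using Cons.IH[of "[]" "Suc k"] by simp
      then show ?thesis using Up Nil by (auto simp: nth_Cons')
    next
      case (Cons t st')
      have "(i,j) = (t,k) \<or> (i,j) \<in> set (join_scan st' (zip [Suc k..<Suc k+length ws] ws))"
        using Cons.prems(1)[unfolded zip_upt_Cons] Up Cons by simp
      then show ?thesis
      proof
        assume "(i,j) = (t,k)" then show ?thesis using Up Cons Cons.prems by auto
      next
        assume h: "(i,j) \<in> set (join_scan st' (zip [Suc k..<Suc k+length ws] ws))"
        have "\<forall>s\<in>set st'. s < Suc k" using Cons.prems Cons by auto
        then have "Suc k \<le> j \<and> j < Suc k+length ws \<and> ws!(j-Suc k) = Up \<and> i<j \<and> (i \<in> set st' \<or> (Suc k \<le> i \<and> ws!(i-Suc k) = Down))"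
          using Cons.IH h by blast
        then show ?thesis using Up Cons by (auto simp: nth_Cons')
      qed
    qed
  qed
qed

lemma js_distinct:
  assumes "distinct st" "\<forall>s\<in>set st. s<k"
  shows "distinct (map fst (join_scan st (zip [k..<k+length ws] ws))) \<and>
         distinct (map snd (join_scan st (zip [k..<k+length ws] ws)))"
  using assms
proof (induction ws arbitrary: st k)
  case Nil
  then show ?case by simp
next
  case (Cons x ws)
  show ?case
  proof (cases x)
    case Down
    have "distinct (k#st)" "\<forall>s\<in>set (k#st). s < Suc k" using Cons.prems by auto
    then show ?thesis using Cons.IH[of "k#st" "Suc k"] Down by (simp only: zip_upt_Cons) simp
  next
    case Up
    show ?thesis
    proof (cases st)
      case Nil
      then show ?thesis using Cons.IH[of "[]" "Suc k"] Up by (simp only: zip_upt_Cons) simp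
    next
      case (Cons t st')
      have st': "distinct st'" "\<forall>s\<in>set st'. s < Suc k" "t \<notin> set st'" "t < k"
        using Cons.prems Cons by auto
      let ?r = "join_scan st' (zip [Suc k..<Suc k+length ws] ws)"
      have ih: "distinct (map fst ?r) \<and> distinct (map snd ?r)" using Cons.IH st' by blast
      have "t \<notin> fst ` set ?r"
      proof
        assume "t \<in> fst ` set ?r"
        then obtain j where "(t,j) \<in> set ?r" by force
        from js_A1[OF this st'(2)] st' show False by auto
      qed
      moreover have "k \<notin> snd ` set ?r"
      proof
        assume "k \<in> snd ` set ?r"
        then obtain i where "(i,k) \<in> set ?r" by force
        from js_A1[OF this st'(2)] show False by auto
      qed
      ultimately show ?thesis using ih Up Cons by (simp only: zip_upt_Cons) simp
    qed
  qed
qed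

lemma js_match:
  assumes "s \<in> set st \<or> (k \<le> s \<and> s < q \<and> ws!(s-k) = Down)" "k \<le> q" "q < k+length ws" "ws!(q-k) = Up"
  shows "(\<exists>j. (s,j) \<in> set (join_scan st (zip [k..<k+length ws] ws))) \<or>
         (\<exists>i. (i,q) \<in> set (join_scan st (zip [k..<k+length ws] ws)))"
  using assms
proof (induction ws arbitrary: st k)
  case Nil
  then show ?case by simp
next
  case (Cons x ws)
  show ?case
  proof (cases x)
    case Down
    have qk: "q \<noteq> k" using Cons.prems Down by auto
    have "s \<in> set (k#st) \<or> (Suc k \<le> s \<and> s < q \<and> ws!(s-Suc k) = Down)"
      using Cons.prems(1) by (cases "s = k") (auto simp: nth_Cons')
    moreover have "Suc k \<le> q" "q < Suc k + length ws" "ws!(q - Suc k) = Up"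
      using Cons.prems qk by (auto simp: nth_Cons')
    ultimately show ?thesis using Cons.IH[of "k#st" "Suc k"] Down by (simp only: zip_upt_Cons) simp
  next
    case Up
    show ?thesis
    proof (cases st)
      case Nil
      have "s \<noteq> k" using Cons.prems(1) Nil Up by auto
      then have "Suc k \<le> s \<and> s < q \<and> ws!(s-Suc k) = Down"
        using Cons.prems(1) Nil by (auto simp: nth_Cons')
      moreover have "Suc k \<le> q" "q < Suc k + length ws" "ws!(q - Suc k) = Up"
        using Cons.prems \<open>s \<noteq> k\<close> calculation by (auto simp: nth_Cons')
      ultimately show ?thesis using Cons.IH[of "[]" "Suc k"] Up Nil by (simp only: zip_upt_Cons) simp
    next
      case (Cons t st')
      show ?thesis
      proof (cases "q = k \<or> s = t")
        case True
        then show ?thesis using Up Cons by (simp only: zip_upt_Cons) auto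
      next
        case False
        have "s \<in> set st' \<or> (Suc k \<le> s \<and> s < q \<and> ws!(s-Suc k) = Down)"
        proof (cases "s \<in> set st")
          case True then show ?thesis using Cons False by auto
        next
          case False
          then have "k \<le> s \<and> s < q \<and> (x#ws)!(s-k) = Down" using Cons.prems(1) by auto
          moreover then have "s \<noteq> k" using Up by auto
          ultimately show ?thesis by (auto simp: nth_Cons')
        qed
        moreover have "Suc k \<le> q" "q < Suc k + length ws" "ws!(q - Suc k) = Up"
          using Cons.prems False by (auto simp: nth_Cons')
        ultimately show ?thesis using Cons.IH[of st' "Suc k"] Up Cons by (simp only: zip_upt_Cons) auto
      qed
    qed
  qed
qed

lemma zip0: "zip [0..<length w] w = zip [0..<0+length w] w" by simp

lemma cup_props:
  assumes "(i,j) \<in> cups w"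
  shows "i < j \<and> j < length w \<and> w!i = Down \<and> w!j = Up"
proof -
  have "(i,j) \<in> set (join_scan [] (zip [0..<0+length w] w))" using assms by (simp add: cups_def)
  from js_A1[OF this] show ?thesis by simp
qed

lemma cups_distinct:
  "distinct (map fst (join_scan [] (zip [0..<length w] w))) \<and> distinct (map snd (join_scan [] (zip [0..<length w] w)))"
  using js_distinct[of "[]" 0 w] by simp

lemma cup_inj1: "(i,j) \<in> cups w \<Longrightarrow> (i,l) \<in> cups w \<Longrightarrow> j = l"
  using cups_distinct[of w] unfolding cups_def distinct_map inj_on_def by force

lemma cup_inj2: "(i,j) \<in> cups w \<Longrightarrow> (k,j) \<in> cups w \<Longrightarrow> i = k"
  using cups_distinct[of w] unfolding cups_def distinct_map inj_on_def by force

lemma finite_cups: "finite (cups w)" by (simp add: cups_def)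

lemma half_sorted:
  assumes "p \<in> halflines w" "q \<in> halflines w" "p < q" "w!p = Down"
  shows "w!q = Down"
proof (rule ccontr)
  assume "w!q \<noteq> Down"
  then have qu: "w!q = Up" by (cases "w!q") auto
  have "q < length w" using assms(2) by (simp add: halflines_def)
  then have "(\<exists>j. (p,j) \<in> set (join_scan [] (zip [0..<0+length w] w))) \<or>
         (\<exists>i. (i,q) \<in> set (join_scan [] (zip [0..<0+length w] w)))"
    using js_match[of p "[]" 0 q w] assms qu by simp
  then have "(\<exists>j. (p,j) \<in> cups w) \<or> (\<exists>i. (i,q) \<in> cups w)" by (simp add: cups_def)
  then show False using assms(1,2) unfolding halflines_def endpoints_def by force
qed

lemma sym_eq: "(x = Down \<longleftrightarrow> y = Down) \<Longrightarrow> x = (y::sym)"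
  by (cases x; cases y) auto

lemma sym_neq: "x \<noteq> Down \<Longrightarrow> x = Up"
  by (cases x) auto

lemma upper_eq:
  fixes A B H :: "nat set"
  assumes "finite B" "finite A" "A \<subseteq> H" "B \<subseteq> H"
    "\<forall>x\<in>A. \<forall>y\<in>H. x < y \<longrightarrow> y \<in> A" "\<forall>x\<in>B. \<forall>y\<in>H. x < y \<longrightarrow> y \<in> B"
    "card A = card B"
  shows "A = B"
proof -
  have "A \<subseteq> B \<or> B \<subseteq> A"
  proof (rule ccontr)
    assume "\<not> (A \<subseteq> B \<or> B \<subseteq> A)"
    then obtain x y where "x \<in> A" "x \<notin> B" "y \<in> B" "y \<notin> A" by blast
    then show False using assms(3-6) by (cases x y rule: linorder_cases) auto
  qed
  then show ?thesis
  proof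
    assume "A \<subseteq> B" then show ?thesis using card_subset_eq assms by blast
  next
    assume "B \<subseteq> A"
    then show ?thesis using card_subset_eq assms by metis
  qed
qed

lemma endpoints_bound: "p \<in> endpoints (cups w) \<Longrightarrow> p < length w"
  unfolding endpoints_def using cup_props by fastforce

lemma half_eq:
  assumes ok: "side_ok a lam" and len: "length lam = length a"
    and cnt: "card {p. p < length lam \<and> lam!p = Down} = card {p. p < length a \<and> a!p = Down}"
    and p: "p \<in> halflines a"
  shows "lam!p = a!p"
proof -
  define L where "L = length a"
  define E where "E = endpoints (cups a)"
  define H where "H = halflines a"
  define DL where "DL = {p. p < L \<and> lam!p = Down}"
  define DA where "DA = {p. p < L \<and> a!p = Down}"
  have H: "H = {0..<L} - E" by (simp add: H_def halflines_def E_def L_def)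
  have EL: "E \<subseteq> {0..<L}" using endpoints_bound E_def L_def by auto
  have fin: "finite DL" "finite DA" by (auto simp: DL_def DA_def)
  have "DL = (DL \<inter> E) \<union> (DL \<inter> H)" using H by (auto simp: DL_def)
  then have splitL: "card DL = card (DL \<inter> E) + card (DL \<inter> H)"
    using card_Un_disjoint[of "DL \<inter> E" "DL \<inter> H"] fin H by auto
  have "DA = (DA \<inter> E) \<union> (DA \<inter> H)" using H by (auto simp: DA_def)
  then have splitA: "card DA = card (DA \<inter> E) + card (DA \<inter> H)"
    using card_Un_disjoint[of "DA \<inter> E" "DA \<inter> H"] fin H by auto
  have cupok: "\<And>i j. (i,j) \<in> cups a \<Longrightarrow> lam!i \<noteq> lam!j" using ok unfolding side_ok_def by blast
  have "DA \<inter> E = fst ` cups a"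
  proof
    show "DA \<inter> E \<subseteq> fst ` cups a"
    proof
      fix x assume "x \<in> DA \<inter> E"
      then have "a!x = Down" "x \<in> fst ` cups a \<or> x \<in> snd ` cups a"
        by (auto simp: DA_def E_def endpoints_def)
      then show "x \<in> fst ` cups a" using cup_props by fastforce
    qed
    show "fst ` cups a \<subseteq> DA \<inter> E"
      using cup_props unfolding DA_def E_def endpoints_def L_def by fastforce
  qed
  moreover have "inj_on fst (cups a)" unfolding inj_on_def using cup_inj1 by force
  ultimately have cA: "card (DA \<inter> E) = card (cups a)" by (simp add: card_image)
  define f where "f = (\<lambda>(i::nat,j::nat). if lam!i = Down then i else j)"
  have "DL \<inter> E = f ` cups a"
  proof
    show "DL \<inter> E \<subseteq> f ` cups a"
    proof
      fix x assume x: "x \<in> DL \<inter> E"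
      then have "lam!x = Down" "x \<in> fst ` cups a \<or> x \<in> snd ` cups a"
        by (auto simp: DL_def E_def endpoints_def)
      then obtain i j where ij: "(i,j) \<in> cups a" "x = i \<or> x = j" by force
      have "f (i,j) = x" using ij cupok[OF ij(1)] \<open>lam!x = Down\<close> by (auto simp: f_def)
      then show "x \<in> f ` cups a" using ij by force
    qed
    show "f ` cups a \<subseteq> DL \<inter> E"
    proof
      fix x assume "x \<in> f ` cups a"
      then obtain i j where ij: "(i,j) \<in> cups a" "x = f (i,j)" by force
      have "lam!x = Down" using ij cupok[OF ij(1)] by (cases "lam!i"; cases "lam!j") (auto simp: f_def)
      moreover have "x \<in> E" using ij by (force simp: f_def E_def endpoints_def)
      ultimately show "x \<in> DL \<inter> E" using EL by (auto simp: DL_def)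
    qed
  qed
  moreover have "inj_on f (cups a)"
  proof (rule inj_onI)
    fix x y assume xy: "x \<in> cups a" "y \<in> cups a" "f x = f y"
    obtain i j where x: "x = (i,j)" by force
    obtain k l where y: "y = (k,l)" by force
    have pi: "i < j \<and> a!i = Down \<and> a!j = Up" "k < l \<and> a!k = Down \<and> a!l = Up"
      using cup_props xy x y by blast+
    show "x = y"
    proof (cases "lam!i = Down"; cases "lam!k = Down")
      assume "lam!i = Down" "lam!k = Down"
      then have "i = k" using xy x y by (simp add: f_def)
      then show ?thesis using cup_inj1 xy x y by blast
    next
      assume "lam!i = Down" "lam!k \<noteq> Down"
      then have "i = l" using xy x y by (simp add: f_def)
      then show ?thesis using pi by simp
    next
      assume "lam!i \<noteq> Down" "lam!k = Down"
      then have "j = k" using xy x y by (simp add: f_def)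
      then show ?thesis using pi by simp
    next
      assume "lam!i \<noteq> Down" "lam!k \<noteq> Down"
      then have "j = l" using xy x y by (simp add: f_def)
      then show ?thesis using cup_inj2 xy x y by blast
    qed
  qed
  ultimately have cL: "card (DL \<inter> E) = card (cups a)" by (simp add: card_image)
  have cnt': "card DL = card DA" using cnt len by (simp add: DL_def DA_def L_def)
  have ceq: "card (DL \<inter> H) = card (DA \<inter> H)" using splitL splitA cA cL cnt' by simp
  have halfok: "\<And>x y. x \<in> H \<Longrightarrow> y \<in> H \<Longrightarrow> x < y \<Longrightarrow> lam!x = Down \<Longrightarrow> lam!y = Down"
    using ok sym_neq unfolding side_ok_def H_def by blast
  have "DL \<inter> H = DA \<inter> H"
  proof (rule upper_eq[of _ _ H])
    show "\<forall>x\<in>DL \<inter> H. \<forall>y\<in>H. x < y \<longrightarrow> y \<in> DL \<inter> H"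
      using halfok H by (auto simp: DL_def)
    show "\<forall>x\<in>DA \<inter> H. \<forall>y\<in>H. x < y \<longrightarrow> y \<in> DA \<inter> H"
      using half_sorted H by (auto simp: DA_def H_def)
  qed (use fin ceq in auto)
  then have "lam!p = Down \<longleftrightarrow> a!p = Down" using p H by (auto simp: DL_def DA_def H_def)
  then show ?thesis by (rule sym_eq)
qed

lemma swap_nth:
  assumes "i < length w" "j < length w" "i \<noteq> j"
  shows "swap_labels i j w ! p = (if p = i then w!j else if p = j then w!i else w!p)"
  using assms by (simp add: swap_labels_def nth_list_update)

lemma swap_len[simp]: "length (swap_labels i j w) = length w"
  by (simp add: swap_labels_def)

lemma not_half:
  assumes "p < length a" "p \<notin> halflines a"
  obtains i j where "(i,j) \<in> cups a" "p = i \<or> p = j"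
  using assms unfolding halflines_def endpoints_def by force

lemma cup_not_half: "(i,j) \<in> cups a \<Longrightarrow> i \<notin> halflines a \<and> j \<notin> halflines a"
  unfolding halflines_def endpoints_def by force

lemma classify:
  assumes ok: "side_ok a lam" and len: "length lam = length a"
    and cnt: "card {p. p < length lam \<and> lam!p = Down} = card {p. p < length a \<and> a!p = Down}"
  shows "(clockwise a lam = 0 \<longrightarrow> lam = a) \<and>
         (clockwise a lam = 1 \<longrightarrow> (\<exists>(i,j) \<in> cups a. lam = swap_labels i j a))"
proof -
  have cupok: "\<And>i j. (i,j) \<in> cups a \<Longrightarrow> lam!i \<noteq> lam!j" using ok unfolding side_ok_def by blast
  have he: "\<And>p. p \<in> halflines a \<Longrightarrow> lam!p = a!p" using half_eq[OF ok len cnt] .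
  define C where "C = {(i, j) \<in> cups a. lam ! i = Up}"
  have finC: "finite C" by (rule finite_subset[OF _ finite_cups[of a]]) (auto simp: C_def)
  have cw: "clockwise a lam = card C" by (simp add: clockwise_def C_def)
  have "clockwise a lam = 0 \<longrightarrow> lam = a"
  proof
    assume "clockwise a lam = 0"
    then have Ce: "C = {}" using cw finC by simp
    show "lam = a"
    proof (rule nth_equalityI)
      show "length lam = length a" by (rule len)
      fix p assume "p < length lam"
      then have p: "p < length a" using len by simp
      show "lam!p = a!p"
      proof (cases "p \<in> halflines a")
        case True then show ?thesis using he by blast
      next
        case False
        then obtain i j where ij: "(i,j) \<in> cups a" "p = i \<or> p = j" using not_half p by blast
        have "lam!i \<noteq> Up" using Ce ij by (auto simp: C_def)
        then show ?thesis using ij cup_props[OF ij(1)] cupok[OF ij(1)]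
          by (cases "lam!i"; cases "lam!j") auto
      qed
    qed
  qed
  moreover have "clockwise a lam = 1 \<longrightarrow> (\<exists>(i,j) \<in> cups a. lam = swap_labels i j a)"
  proof
    assume "clockwise a lam = 1"
    then obtain c where Cc: "C = {c}" using cw card_1_singletonE by metis
    obtain i j where c: "c = (i,j)" by force
    have ij: "(i,j) \<in> cups a" "lam!i = Up" using Cc c by (auto simp: C_def)
    have pij: "i < j \<and> j < length a \<and> a!i = Down \<and> a!j = Up" using cup_props[OF ij(1)] .
    have lj: "lam!j = Down" using cupok[OF ij(1)] ij(2) by (cases "lam!j") auto
    have "lam = swap_labels i j a"
    proof (rule nth_equalityI)
      show "length lam = length (swap_labels i j a)" using len by simp
      fix p assume "p < length lam"
      then have p: "p < length a" using len by simp
      have sw: "swap_labels i j a ! p = (if p = i then a!j else if p = j then a!i else a!p)"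
        using swap_nth pij by simp
      show "lam!p = swap_labels i j a ! p"
      proof (cases "p \<in> halflines a")
        case True
        then have "p \<noteq> i" "p \<noteq> j" using cup_not_half[OF ij(1)] by auto
        then show ?thesis using he True sw by simp
      next
        case False
        then obtain k l where kl: "(k,l) \<in> cups a" "p = k \<or> p = l" using not_half p by blast
        have pkl: "k < l \<and> a!k = Down \<and> a!l = Up" using cup_props[OF kl(1)] by blast
        show ?thesis
        proof (cases "(k,l) = (i,j)")
          case True
          then show ?thesis using kl sw pij ij lj by auto
        next
          case False
          then have "lam!k \<noteq> Up" using Cc c kl by (auto simp: C_def)
          then have lk: "lam!k = Down" "lam!l = Up" using cupok[OF kl(1)]
            by (cases "lam!k"; cases "lam!l"; simp)+
          have "p \<noteq> i"
          proof
            assume "p = i"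
            show False
            proof (cases "p = k")
              case True
              then have "(i,l) \<in> cups a" using kl \<open>p = i\<close> by simp
              then have "l = j" using cup_inj1[OF ij(1)] by blast
              then show False using False True \<open>p = i\<close> by simp
            next
              case False
              then have "p = l" using kl by blast
              then show False using pkl pij \<open>p = i\<close> by simp
            qed
          qed
          moreover have "p \<noteq> j"
          proof
            assume "p = j"
            show False
            proof (cases "p = l")
              case True
              then have "(k,j) \<in> cups a" using kl \<open>p = j\<close> by simp
              then have "k = i" using cup_inj2[OF ij(1)] by blast
              then show False using False True \<open>p = j\<close> by simp
            next
              case False
              then have "p = k" using kl by blast
              then show False using pkl pij \<open>p = j\<close> by simp
            qed
          qed
          ultimately show ?thesis using sw kl lk pkl by auto
        qed
      qed
    qed
    then show "\<exists>(i,j) \<in> cups a. lam = swap_labels i j a" using ij(1) by blast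
  qed
  ultimately show ?thesis by blast
qed

lemma ok_self: "side_ok a a"
proof -
  have "\<forall>(i, j) \<in> cups a. a ! i \<noteq> a ! j"
  proof clarify
    fix i j assume "(i,j) \<in> cups a" "a!i = a!j"
    then show False using cup_props[of i j a] by simp
  qed
  moreover have "\<not> (\<exists>i \<in> halflines a. \<exists>j \<in> halflines a. i < j \<and> a ! i = Down \<and> a ! j = Up)"
  proof clarify
    fix i j assume "i \<in> halflines a" "j \<in> halflines a" "i < j" "a!i = Down" "a!j = Up"
    then show False using half_sorted[of i a j] by simp
  qed
  ultimately show ?thesis unfolding side_ok_def by blast
qed

lemma cw_self: "clockwise a a = 0"
proof -
  have "{(i, j) \<in> cups a. a ! i = Up} = {}"
  proof (rule equals0I, clarify)
    fix i j assume "(i,j) \<in> cups a" "a!i = Up"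
    then show False using cup_props[of i j a] by simp
  qed
  then show ?thesis unfolding clockwise_def by (metis card.empty)
qed

lemma ok_swap:
  assumes ij: "(i,j) \<in> cups a"
  shows "side_ok a (swap_labels i j a) \<and> clockwise a (swap_labels i j a) = 1"
proof -
  have pij: "i < j \<and> j < length a \<and> a!i = Down \<and> a!j = Up" using cup_props[OF ij] .
  let ?l = "swap_labels i j a"
  have sw: "\<And>p. ?l ! p = (if p = i then a!j else if p = j then a!i else a!p)"
    using swap_nth pij by simp
  have swi: "?l ! i = Up" and swj: "?l ! j = Down" using sw pij by auto
  have swo: "\<And>p. p \<noteq> i \<Longrightarrow> p \<noteq> j \<Longrightarrow> ?l ! p = a ! p" using sw by simp
  have other: "\<And>k l. (k,l) \<in> cups a \<Longrightarrow> (k,l) \<noteq> (i,j) \<Longrightarrow> k \<noteq> i \<and> k \<noteq> j \<and> l \<noteq> i \<and> l \<noteq> j"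
  proof -
    fix k l assume kl: "(k,l) \<in> cups a" "(k,l) \<noteq> (i,j)"
    have pkl: "k < l \<and> a!k = Down \<and> a!l = Up" using cup_props[OF kl(1)] by blast
    have "k \<noteq> i"
    proof
      assume "k = i"
      then have "(i,l) \<in> cups a" using kl by simp
      then have "l = j" using cup_inj1[OF ij] by blast
      then show False using kl \<open>k = i\<close> by simp
    qed
    moreover have "l \<noteq> j"
    proof
      assume "l = j"
      then have "(k,j) \<in> cups a" using kl by simp
      then have "k = i" using cup_inj2[OF ij] by blast
      then show False using kl \<open>l = j\<close> by simp
    qed
    moreover have "k \<noteq> j" "l \<noteq> i" using pkl pij by auto
    ultimately show "k \<noteq> i \<and> k \<noteq> j \<and> l \<noteq> i \<and> l \<noteq> j" by blast
  qed
  have c1: "\<forall>(k,l) \<in> cups a. ?l!k \<noteq> ?l!l"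
  proof (clarify)
    fix k l assume kl: "(k,l) \<in> cups a" "?l!k = ?l!l"
    show False
    proof (cases "(k,l) = (i,j)")
      case True then show False using kl swi swj by simp
    next
      case False
      then have "?l!k = a!k" "?l!l = a!l" using other[OF kl(1) False] swo by auto
      then show False using kl cup_props[OF kl(1)] by simp
    qed
  qed
  have hh: "\<And>p. p \<in> halflines a \<Longrightarrow> ?l!p = a!p" using swo cup_not_half[OF ij] by metis
  have c2: "\<not> (\<exists>p \<in> halflines a. \<exists>q \<in> halflines a. p < q \<and> ?l ! p = Down \<and> ?l ! q = Up)"
  proof clarify
    fix p q assume pq: "p \<in> halflines a" "q \<in> halflines a" "p < q" "?l!p = Down" "?l!q = Up"
    then have "a!p = Down" "a!q = Up" using hh by auto
    then show False using half_sorted[OF pq(1,2,3)] by simp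
  qed
  have "{(k, l) \<in> cups a. ?l ! k = Up} = {(i,j)}"
  proof (rule set_eqI)
    fix x :: "nat \<times> nat"
    obtain k l where x: "x = (k,l)" by (cases x)
    show "x \<in> {(k, l) \<in> cups a. ?l ! k = Up} \<longleftrightarrow> x \<in> {(i,j)}"
    proof
      assume "x \<in> {(k, l) \<in> cups a. ?l ! k = Up}"
      then have kl: "(k,l) \<in> cups a" "?l!k = Up" using x by simp_all
      show "x \<in> {(i,j)}"
      proof (rule ccontr)
        assume "x \<notin> {(i,j)}"
        then have "(k,l) \<noteq> (i,j)" using x by simp
        then have "k \<noteq> i \<and> k \<noteq> j" using other[OF kl(1)] by blast
        then have "?l!k = a!k" using swo by blast
        then show False using kl cup_props[OF kl(1)] by simp
      qed
    next
      assume "x \<in> {(i,j)}"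
      then show "x \<in> {(k, l) \<in> cups a. ?l ! k = Up}" using ij swi by simp
    qed
  qed
  then have "clockwise a ?l = 1" by (simp add: clockwise_def)
  then show ?thesis using c1 c2 by (simp add: side_ok_def)
qed

lemma weights_props:
  assumes "w \<in> weights m n"
  shows "length w = m + n \<and> card {p. p < length w \<and> w!p = Down} = m"
proof -
  have f: "filter (\<lambda>s. \<not> s = Down) w = filter (\<lambda>s. s = Up) w"
    by (rule filter_cong) (auto intro: sym_neq)
  have "length (filter (\<lambda>s. s = Down) w) + length (filter (\<lambda>s. \<not> s = Down) w) = length w"
    by (rule sum_length_filter_compl)
  then show ?thesis using assms f unfolding weights_def
    by (simp add: length_filter_conv_card)
qed

theorem lemma2p5:
  fixes m n :: nat
  assumes "m \<ge> 1" and "n \<ge> 1"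
  shows "\<forall>a \<in> weights m n. \<forall>b \<in> weights m n.
           num_arrows m n a b = (if gamma_edge a b then 1 else 0)"
proof (intro ballI)
  fix a b assume a: "a \<in> weights m n" and b: "b \<in> weights m n"
  define E1 where "E1 = (\<exists>(i,j) \<in> cups a. b = swap_labels i j a)"
  define E2 where "E2 = (\<exists>(i,j) \<in> cups b. a = swap_labels i j b)"
  define S where "S = {lam \<in> weights m n. arc_diagram a lam b \<and> degree a lam b = 1}"
  have ge: "gamma_edge a b = (E1 \<or> E2)" by (simp add: gamma_edge_def E1_def E2_def)
  have cl: "\<And>x lam. x \<in> weights m n \<Longrightarrow> lam \<in> weights m n \<Longrightarrow> side_ok x lam \<Longrightarrow>
      (clockwise x lam = 0 \<longrightarrow> lam = x) \<and>
      (clockwise x lam = 1 \<longrightarrow> (\<exists>(i,j) \<in> cups x. lam = swap_labels i j x))"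
  proof -
    fix x lam assume h: "x \<in> weights m n" "lam \<in> weights m n" "side_ok x lam"
    have w1: "length x = m + n" "card {p. p < length x \<and> x!p = Down} = m"
      using weights_props[OF h(1)] by blast+
    have w2: "length lam = m + n" "card {p. p < length lam \<and> lam!p = Down} = m"
      using weights_props[OF h(2)] by blast+
    have "length lam = length x" using w1 w2 by simp
    moreover have "card {p. p < length lam \<and> lam!p = Down} = card {p. p < length x \<and> x!p = Down}"
      using w1(2) w2(2) by simp
    ultimately show "(clockwise x lam = 0 \<longrightarrow> lam = x) \<and>
      (clockwise x lam = 1 \<longrightarrow> (\<exists>(i,j) \<in> cups x. lam = swap_labels i j x))"
      using classify[OF h(3)] by blast
  qed
  have nb: "\<not> (E1 \<and> E2)"
  proof
    assume "E1 \<and> E2"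
    then obtain i j k l where ij: "(i,j) \<in> cups a" "b = swap_labels i j a"
      and kl: "(k,l) \<in> cups b" "a = swap_labels k l b" unfolding E1_def E2_def by blast
    have pij: "i < j \<and> j < length a \<and> a!i = Down \<and> a!j = Up" using cup_props[OF ij(1)] .
    have pkl: "k < l \<and> l < length b \<and> b!k = Down \<and> b!l = Up" using cup_props[OF kl(1)] .
    have bi: "b!i = Up" "b!j = Down" using ij(2) swap_nth pij by auto
    have "a ! p = (if p = k then b!l else if p = l then b!k else b!p)" for p
      using kl(2) swap_nth pkl by simp
    then have "i = k \<or> i = l" "j = k \<or> j = l" using bi pij by (metis sym.distinct(1))+
    then show False using pij pkl bi by auto
  qed
  have mem: "\<And>lam. lam \<in> S \<Longrightarrow> (lam = b \<and> E1) \<or> (lam = a \<and> E2)"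
  proof -
    fix lam assume "lam \<in> S"
    then have l: "lam \<in> weights m n" "side_ok a lam" "side_ok b lam"
      "clockwise a lam + clockwise b lam = 1"
      by (auto simp: S_def arc_diagram_def degree_def)
    then have "(clockwise a lam = 1 \<and> clockwise b lam = 0) \<or> (clockwise a lam = 0 \<and> clockwise b lam = 1)"
      by auto
    then show "(lam = b \<and> E1) \<or> (lam = a \<and> E2)"
    proof
      assume h: "clockwise a lam = 1 \<and> clockwise b lam = 0"
      then have "lam = b" using cl[OF b l(1) l(3)] by blast
      moreover have "\<exists>(i,j) \<in> cups a. lam = swap_labels i j a" using h cl[OF a l(1) l(2)] by blast
      ultimately show ?thesis unfolding E1_def by blast
    next
      assume h: "clockwise a lam = 0 \<and> clockwise b lam = 1"
      then have "lam = a" using cl[OF a l(1) l(2)] by blast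
      moreover have "\<exists>(i,j) \<in> cups b. lam = swap_labels i j b" using h cl[OF b l(1) l(3)] by blast
      ultimately show ?thesis unfolding E2_def by blast
    qed
  qed
  have inS1: "E1 \<Longrightarrow> b \<in> S"
  proof -
    assume E1
    then obtain i j where "(i,j) \<in> cups a" "b = swap_labels i j a" unfolding E1_def by blast
    then have "side_ok a b" "clockwise a b = 1" using ok_swap by auto
    then show "b \<in> S" using b ok_self[of b] cw_self[of b]
      by (simp add: S_def arc_diagram_def degree_def)
  qed
  have inS2: "E2 \<Longrightarrow> a \<in> S"
  proof -
    assume E2
    then obtain i j where "(i,j) \<in> cups b" "a = swap_labels i j b" unfolding E2_def by blast
    then have "side_ok b a" "clockwise b a = 1" using ok_swap by auto
    then show "a \<in> S" using a ok_self[of a] cw_self[of a]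
      by (simp add: S_def arc_diagram_def degree_def)
  qed
  have Seq: "S = (if E1 then {b} else if E2 then {a} else {})"
    using mem inS1 inS2 nb by auto
  then show "num_arrows m n a b = (if gamma_edge a b then 1 else 0)"
  proof -
    have "num_arrows m n a b = card S" by (simp add: num_arrows_def S_def)
    then show ?thesis using ge Seq by simp
  qed
qed

end
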